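(* Let $N\ge3$, let $f_1,\dots,f_N$ be coordinates with Poisson brackets $\{f_m,f_n\}=-\delta_{m+1,n}+\delta_{m-1,n}$ (indices mod $N$), and let $\beta_1,\dots,\beta_{N-2}$ be constants. For $m=1,\dots,N-2$ let $F_m(\lambda)=\prod_{n=m}^{N-2}\bigl(1+(\lambda+\beta_n)\frac{\partial^2}{\partial f_n\partial f_{n+1}}\bigr)(f_m\cdots f_{N-1})$ and $F_{N-1}(\lambda)=f_{N-1}$. Then for each $n=0,1,\dots,N-3$ and independent parameters $\lambda,\mu$, $$\{F_{n+1}(\lambda),F_{n+1}(\mu)\}=\{F_{n+2}(\lambda),F_{n+2}(\mu)\}=0,\qquad \{F_{n+1}(\lambda),F_{n+2}(\mu)\}=\frac{F_{n+2}(\lambda)F_{n+1}(\mu)-F_{n+1}(\lambda)F_{n+2}(\mu)}{\lambda-\mu}.$$ In particular $B(\lambda)=F_1(\lambda)$ and $\tilde A(\lambda)=F_2(\lambda)$ satisfy $\{\tilde A(\lambda),\tilde A(\mu)\}=\{B(\lambda),B(\mu)\}=0$ and $\{\tilde A(\lambda),B(\mu)\}=\frac{B(\lambda)\tilde A(\mu)-\tilde A(\lambda)B(\mu)}{\lambda-\mu}$.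
   Context: Brackets of polynomials in $\lambda$ are computed coefficientwise. When $N$ is even the $f_n$ may additionally be constrained by $f_1+f_3+\cdots+f_{N-1}=f_2+f_4+\cdots+f_N$; the function $v=(f_1+\cdots+f_N)/2$ is a Casimir of this bracket. *)

theory Defs
  imports "HOL-Analysis.Analysis"
begin

text \<open>Functions of the coordinates: a point is x :: nat => real, with x k the value of f_k
 (only k in 1..N matter).  Partial derivative with respect to f_i.\<close>
definition pd :: "nat \<Rightarrow> ((nat \<Rightarrow> real) \<Rightarrow> real) \<Rightarrow> ((nat \<Rightarrow> real) \<Rightarrow> real)" where
  "pd i P = (\<lambda>x. deriv (\<lambda>t. P (x(i := t))) (x i))"

definition pbc :: "nat \<Rightarrow> nat \<Rightarrow> nat \<Rightarrow> real" where
  "pbc N m n = (if (m + 1) mod N = n mod N then -1 else 0)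
             + (if (n + 1) mod N = m mod N then 1 else 0)"

definition pbr :: "nat \<Rightarrow> ((nat \<Rightarrow> real) \<Rightarrow> real) \<Rightarrow> ((nat \<Rightarrow> real) \<Rightarrow> real)
                   \<Rightarrow> ((nat \<Rightarrow> real) \<Rightarrow> real)" where
  "pbr N P Q = (\<lambda>x. \<Sum>m\<in>{1..N}. \<Sum>n\<in>{1..N}. pbc N m n * pd m P x * pd n Q x)"

definition Dop :: "(nat \<Rightarrow> real) \<Rightarrow> real \<Rightarrow> nat \<Rightarrow> ((nat \<Rightarrow> real) \<Rightarrow> real)
                   \<Rightarrow> ((nat \<Rightarrow> real) \<Rightarrow> real)" where
  "Dop beta lam n P = (\<lambda>x. P x + (lam + beta n) * pd n (pd (n + 1) P) x)"

definition FF :: "nat \<Rightarrow> (nat \<Rightarrow> real) \<Rightarrow> nat \<Rightarrow> real \<Rightarrow> ((nat \<Rightarrow> real) \<Rightarrow> real)" where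
  "FF N beta m lam =
     (if m = N - 1 then (\<lambda>x. x (N - 1))
      else foldr (Dop beta lam) [m..<N - 1] (\<lambda>x. \<Prod>k\<in>{m..N - 1}. x k))"

end

theory Submission
  imports Defs
begin

inductive pfn :: "((nat \<Rightarrow> real) \<Rightarrow> real) \<Rightarrow> bool" where
  pconst: "pfn (\<lambda>x. c)"
| pcoord: "pfn (\<lambda>x. x i)"
| padd: "pfn P \<Longrightarrow> pfn Q \<Longrightarrow> pfn (\<lambda>x. P x + Q x)"
| pmult: "pfn P \<Longrightarrow> pfn Q \<Longrightarrow> pfn (\<lambda>x. P x * Q x)"

lemma pfn_diff: "pfn P \<Longrightarrow> (\<lambda>s. P (x(i := s))) field_differentiable (at t)"
proof (induction P rule: pfn.induct)
  case (pcoord j)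
  then show ?case by (cases "i = j") auto
next
  case (padd P Q) then show ?case by (auto intro: field_differentiable_add)
next
  case (pmult P Q) then show ?case by (auto intro: field_differentiable_mult)
qed auto

lemma pd_const: "pd i (\<lambda>x. c) = (\<lambda>x. 0)"
  by (simp add: pd_def)

lemma pd_coord: "pd i (\<lambda>x. x j) = (\<lambda>x. if i = j then 1 else 0)"
  by (cases "i = j") (auto simp: pd_def)

lemma pd_add: "pfn P \<Longrightarrow> pfn Q \<Longrightarrow> pd i (\<lambda>x. P x + Q x) = (\<lambda>x. pd i P x + pd i Q x)"
  unfolding pd_def by (rule ext, rule deriv_add) (auto intro: pfn_diff)

lemma pd_mult: "pfn P \<Longrightarrow> pfn Q \<Longrightarrow> pd i (\<lambda>x. P x * Q x) = (\<lambda>x. pd i P x * Q x + P x * pd i Q x)"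
  unfolding pd_def
  apply (rule ext)
  apply (subst deriv_mult)
  by (auto intro: pfn_diff)

lemma pfn_pd: "pfn P \<Longrightarrow> pfn (pd i P)"
proof (induction P rule: pfn.induct)
  case (pconst c) then show ?case by (simp add: pd_const pfn.pconst)
next
  case (pcoord j) then show ?case by (cases "i = j") (simp_all add: pd_coord pfn.pconst)
next
  case (padd P Q) then show ?case by (simp add: pd_add pfn.padd)
next
  case (pmult P Q) then show ?case by (simp add: pd_mult pfn.padd pfn.pmult)
qed

definition indep :: "nat \<Rightarrow> ((nat \<Rightarrow> real) \<Rightarrow> real) \<Rightarrow> bool" where
  "indep i P \<longleftrightarrow> (\<forall>x t. P (x(i := t)) = P x)"

lemma pd_indep: "indep i P \<Longrightarrow> pd i P = (\<lambda>x. 0)"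
  unfolding pd_def indep_def by auto

lemma indep_pd: "indep i P \<Longrightarrow> i \<noteq> j \<Longrightarrow> indep i (pd j P)"
  unfolding pd_def indep_def
proof (intro allI)
  fix x t
  assume a: "\<forall>x t. P (x(i := t)) = P x" "i \<noteq> j"
  have "(\<lambda>s. P (x(i := t, j := s))) = (\<lambda>s. P (x(j := s)))"
  proof
    fix s
    have "x(i := t, j := s) = (x(j := s))(i := t)" using a(2) by (auto simp: fun_eq_iff)
    then show "P (x(i := t, j := s)) = P (x(j := s))" using a(1) by metis
  qed
  then show "deriv (\<lambda>s. P (x(i := t, j := s))) ((x(i := t)) j) = deriv (\<lambda>s. P (x(j := s))) (x j)"
    using a(2) by simp
qed


lemma pbc_anti: "pbc N n m = - pbc N m n"
  unfolding pbc_def by simp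

lemma pbr_anti: "pbr N P Q = (\<lambda>x. - pbr N Q P x)"
  unfolding pbr_def
  apply (rule ext)
  apply (subst sum.swap)
  apply (simp add: sum_negf[symmetric])
  apply (rule sum.cong, simp)+
  apply (subst pbc_anti) by simp

lemma pbr_self: "pbr N P P = (\<lambda>x. 0)"
  using pbr_anti[of N P P] by (auto simp: fun_eq_iff)

lemma pbr_const: "pbr N (\<lambda>x. c) Q = (\<lambda>x. 0)"
  unfolding pbr_def by (simp add: pd_const)

lemma pbr_left:
  assumes "pfn P" "pfn Q" "pfn R"
  shows "pbr N (\<lambda>x. P x * Q x + c * R x) S = (\<lambda>x. P x * pbr N Q S x + Q x * pbr N P S x + c * pbr N R S x)"
proof -
  have "pd m (\<lambda>x. P x * Q x + c * R x) = (\<lambda>x. P x * pd m Q x + Q x * pd m P x + c * pd m R x)" for m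
    using assms by (simp add: pd_add pd_mult pd_const pfn.intros algebra_simps)
  then show ?thesis unfolding pbr_def
    by (simp add: sum_distrib_left sum.distrib algebra_simps)
qed

lemma pbr_right:
  assumes "pfn P" "pfn Q" "pfn R"
  shows "pbr N S (\<lambda>x. P x * Q x + c * R x) = (\<lambda>x. P x * pbr N S Q x + Q x * pbr N S P x + c * pbr N S R x)"
  apply (subst pbr_anti)
  apply (subst pbr_left[OF assms])
  apply (subst (2 3 4) pbr_anti)
  by (simp add: algebra_simps)


lemma pbc_eq1:
  fixes N j n :: nat
  assumes "N \<ge> 3" "1 \<le> j" "j \<le> N - 1" "1 \<le> n" "n \<le> N"
  shows "((j + 1) mod N = n mod N) \<longleftrightarrow> n = j + 1"
proof (cases "n = N")
  case True
  then show ?thesis using assms by (cases "j + 1 = N") auto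
next
  case False
  then show ?thesis using assms by (cases "j + 1 = N") auto
qed

lemma pbc_eq2:
  fixes N j n :: nat
  assumes "N \<ge> 3" "1 \<le> j" "j \<le> N - 1" "1 \<le> n" "n \<le> N"
  shows "((n + 1) mod N = j mod N) \<longleftrightarrow> n = (if j \<ge> 2 then j - 1 else N)"
proof (cases "n = N")
  case True
  have "(N + 1) mod N = 1" using assms by (simp add: mod_Suc)
  then show ?thesis using True assms by auto
next
  case False
  then show ?thesis using assms by (cases "n + 1 = N") auto
qed

lemma pbr_coord:
  fixes N j :: nat
  assumes "N \<ge> 3" "1 \<le> j" "j \<le> N - 1" "indep (if j \<ge> 2 then j - 1 else N) Q"
  shows "pbr N (\<lambda>x. x j) Q = (\<lambda>x. - pd (j + 1) Q x)"
proof
  fix x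
  let ?j = "if j \<ge> 2 then j - 1 else N"
  have z: "pd ?j Q x = 0" using pd_indep[OF assms(4)] by metis
  have "pbr N (\<lambda>x. x j) Q x = (\<Sum>n\<in>{1..N}. pbc N j n * pd n Q x)"
  proof -
    have "\<And>m. (\<Sum>n\<in>{1..N}. pbc N m n * pd m (\<lambda>x. x j) x * pd n Q x)
       = (if m = j then (\<Sum>n\<in>{1..N}. pbc N j n * pd n Q x) else 0)"
      by (simp add: pd_coord)
    then show ?thesis unfolding pbr_def using assms by simp
  qed
  also have "\<dots> = (\<Sum>n\<in>{1..N}. (if n = j + 1 then - pd n Q x else 0) + (if n = ?j then pd n Q x else 0))"
    apply (rule sum.cong, simp)
    unfolding pbc_def using pbc_eq1[OF assms(1-3)] pbc_eq2[OF assms(1-3)] by auto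
  also have "\<dots> = - pd (j + 1) Q x"
    using assms z by (simp add: sum.distrib)
  finally show "pbr N (\<lambda>x. x j) Q x = - pd (j + 1) Q x" .
qed


function GG :: "nat \<Rightarrow> (nat \<Rightarrow> real) \<Rightarrow> real \<Rightarrow> nat \<Rightarrow> ((nat \<Rightarrow> real) \<Rightarrow> real)" where
  "GG N beta lam m = (if N \<le> m then (\<lambda>x. if m = N then 1 else 0)
     else (\<lambda>x. x m * GG N beta lam (m + 1) x + (lam + beta m) * GG N beta lam (m + 2) x))"
  by auto
termination by (relation "Wellfounded.measure (\<lambda>(N, beta, lam, m). N - m)") auto

declare GG.simps[simp del]

lemma GG_ge: "N \<le> m \<Longrightarrow> GG N beta lam m = (\<lambda>x. if m = N then 1 else 0)"
  by (simp add: GG.simps)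

lemma GG_lt: "m < N \<Longrightarrow> GG N beta lam m = (\<lambda>x. x m * GG N beta lam (m + 1) x + (lam + beta m) * GG N beta lam (m + 2) x)"
  by (subst GG.simps) simp

lemma GG_pfn: "pfn (GG N beta lam m)"
proof (induction N beta lam m rule: GG.induct)
  case (1 N beta lam m)
  show ?case
  proof (cases "N \<le> m")
    case True
    then show ?thesis by (simp add: GG_ge pfn.pconst)
  next
    case False
    then show ?thesis using 1 by (simp add: GG_lt pfn.intros)
  qed
qed

lemma GG_indep: "i < m \<or> N \<le> i \<Longrightarrow> indep i (GG N beta lam m)"
proof (induction N beta lam m rule: GG.induct)
  case (1 N beta lam m)
  show ?case
  proof (cases "N \<le> m")
    case True
    then show ?thesis by (simp add: GG_ge indep_def)
  next
    case False
    then have "indep i (GG N beta lam (m + 1))" "indep i (GG N beta lam (m + 2))" "i \<noteq> m"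
      using 1 by auto
    then show ?thesis using False by (simp add: GG_lt indep_def)
  qed
qed

lemma GG_pd: "pd m (GG N beta lam m) = GG N beta lam (m + 1)"
proof (cases "N \<le> m")
  case True
  then show ?thesis by (simp add: GG_ge pd_const)
next
  case False
  have i1: "indep m (GG N beta lam (Suc m))" "indep m (GG N beta lam (Suc (Suc m)))"
    by (auto intro: GG_indep)
  have "pd m (GG N beta lam m) = (\<lambda>x. GG N beta lam (m + 1) x)"
    using False
    apply (subst GG_lt, simp)
    apply (subst pd_add, (auto intro!: pfn.intros GG_pfn)[2])
    apply (subst pd_mult, (auto intro!: pfn.intros GG_pfn)[2])
    apply (subst pd_mult, (auto intro!: pfn.intros GG_pfn)[2])
    by (simp add: pd_coord pd_const pd_indep[OF i1(1)] pd_indep[OF i1(2)])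
  then show ?thesis by simp
qed


lemma Dop_pfn: "pfn P \<Longrightarrow> pfn (Dop beta lam n P)"
  unfolding Dop_def by (intro pfn.intros pfn_pd)

lemma foldr_pfn: "pfn P \<Longrightarrow> pfn (foldr (Dop beta lam) js P)"
  by (induction js) (auto intro: Dop_pfn)

lemma Dop_comm:
  assumes "pfn Q" "j \<noteq> m" "j + 1 \<noteq> m"
  shows "Dop beta lam j (\<lambda>x. x m * Q x) = (\<lambda>x. x m * Dop beta lam j Q x)"
proof -
  have "pd (j + 1) (\<lambda>x. x m * Q x) = (\<lambda>x. x m * pd (j + 1) Q x)"
    using assms by (subst pd_mult) (auto intro: pfn.intros simp: pd_coord)
  moreover have "pd j (\<lambda>x. x m * pd (j + 1) Q x) = (\<lambda>x. x m * pd j (pd (j + 1) Q) x)"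
    using assms by (subst pd_mult) (auto intro: pfn.intros pfn_pd simp: pd_coord)
  ultimately show ?thesis unfolding Dop_def by (simp add: algebra_simps)
qed

lemma foldr_comm:
  assumes "pfn Q" "\<forall>j\<in>set js. m < j"
  shows "foldr (Dop beta lam) js (\<lambda>x. x m * Q x) = (\<lambda>x. x m * foldr (Dop beta lam) js Q x)"
  using assms(2)
proof (induction js)
  case Nil
  then show ?case by simp
next
  case (Cons j js)
  then show ?case
    by (simp add: Dop_comm foldr_pfn[OF assms(1)])
qed

lemma FF_foldr: "m \<le> N - 1 \<Longrightarrow> FF N beta m lam = foldr (Dop beta lam) [m..<N - 1] (\<lambda>x. \<Prod>k\<in>{m..N - 1}. x k)"
  unfolding FF_def by auto

lemma prod_pfn: "pfn (\<lambda>x. \<Prod>k\<in>A. x k)"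
proof (cases "finite A")
  case True
  then show ?thesis
    by (induction A rule: finite_induct) (auto intro: pfn.intros)
next
  case False
  then show ?thesis by (simp add: pfn.pconst)
qed

lemma Fo_GG:
  assumes "1 \<le> N" "m \<le> N - 1"
  shows "foldr (Dop beta lam) [m..<N - 1] (\<lambda>x. \<Prod>k\<in>{m..N - 1}. x k) = GG N beta lam m"
  using assms(2)
proof (induction m rule: inc_induct)
  case base
  have "GG N beta lam (N - 1) = (\<lambda>x. x (N - 1))"
    using assms(1) by (subst GG_lt) (auto simp: GG_ge)
  then show ?case by simp
next
  case (step m)
  have ce: "[m..<N - 1] = m # [Suc m..<N - 1]" using step by (simp add: upt_conv_Cons)
  have pe: "(\<lambda>x. \<Prod>k\<in>{m..N - 1}. x k) = (\<lambda>x. x m * (\<Prod>k\<in>{Suc m..N - 1}. x k))"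
    using step by (auto simp: prod.atLeast_Suc_atMost)
  have fe: "foldr (Dop beta lam) [Suc m..<N - 1] (\<lambda>x. x m * (\<Prod>k\<in>{Suc m..N - 1}. x k))
      = (\<lambda>x. x m * GG N beta lam (Suc m) x)"
    using step by (subst foldr_comm) (auto simp: prod_pfn)
  have "foldr (Dop beta lam) [m..<N - 1] (\<lambda>x. \<Prod>k\<in>{m..N - 1}. x k)
     = Dop beta lam m (\<lambda>x. x m * GG N beta lam (Suc m) x)"
    unfolding ce pe foldr_Cons o_apply fe ..
  also have "\<dots> = GG N beta lam m"
  proof -
    have i1: "indep m (GG N beta lam (Suc m))" by (auto intro: GG_indep)
    have "pd (Suc m) (\<lambda>x. x m * GG N beta lam (Suc m) x) = (\<lambda>x. x m * GG N beta lam (Suc (Suc m)) x)"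
      using GG_pd[of "Suc m" N beta lam] by (subst pd_mult) (auto intro: pfn.intros GG_pfn simp: pd_coord)
    moreover have "pd m (\<lambda>x. x m * GG N beta lam (Suc (Suc m)) x) = (\<lambda>x. GG N beta lam (Suc (Suc m)) x)"
    proof -
      have i2: "indep m (GG N beta lam (Suc (Suc m)))" by (auto intro: GG_indep)
      show ?thesis by (subst pd_mult) (auto intro: pfn.intros GG_pfn simp: pd_coord pd_indep[OF i2])
    qed
    ultimately show ?thesis unfolding Dop_def using step
      by (subst (2) GG_lt) auto
  qed
  finally show ?case .
qed

lemma FF_GG: "1 \<le> N \<Longrightarrow> m \<le> N - 1 \<Longrightarrow> FF N beta m lam = GG N beta lam m"
  using FF_foldr Fo_GG by metis


definition SS :: "nat \<Rightarrow> (nat \<Rightarrow> real) \<Rightarrow> nat \<Rightarrow> bool" where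
  "SS N beta m \<longleftrightarrow> (\<forall>lam mu. lam \<noteq> mu \<longrightarrow>
      pbr N (GG N beta lam m) (GG N beta mu m) = (\<lambda>x. 0)
    \<and> pbr N (GG N beta lam (Suc m)) (GG N beta mu (Suc m)) = (\<lambda>x. 0)
    \<and> pbr N (GG N beta lam m) (GG N beta mu (Suc m)) =
        (\<lambda>x. (GG N beta lam (Suc m) x * GG N beta mu m x - GG N beta lam m x * GG N beta mu (Suc m) x) / (lam - mu)))"

lemma SS_base: "SS N beta N"
  unfolding SS_def by (simp add: GG_ge pbr_const)

lemma pbr_X:
  assumes "N \<ge> 3" "1 \<le> j" "j < N" "Suc j \<le> k"
  shows "pbr N (\<lambda>x. x j) (GG N beta l k) = (\<lambda>x. - pd (Suc j) (GG N beta l k) x)"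
proof -
  have "indep (if j \<ge> 2 then j - 1 else N) (GG N beta l k)"
    using assms by (intro GG_indep) auto
  then show ?thesis using pbr_coord[of N j] assms by simp
qed

lemma SS_step:
  assumes N3: "N \<ge> 3" and j1: "1 \<le> j" and jN: "j < N" and IH: "SS N beta (Suc j)"
  shows "SS N beta j"
  unfolding SS_def
proof (intro allI impI)
  fix lam mu :: real
  assume ne: "lam \<noteq> mu"
  define X where "X = (\<lambda>x::nat \<Rightarrow> real. x j)"
  define A where "A = GG N beta lam (Suc j)"
  define A' where "A' = GG N beta mu (Suc j)"
  define B where "B = GG N beta lam (Suc (Suc j))"
  define B' where "B' = GG N beta mu (Suc (Suc j))"
  define a where "a = lam + beta j"
  define a' where "a' = mu + beta j"
  have hC: "GG N beta lam j = (\<lambda>x. X x * A x + a * B x)"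
    unfolding X_def A_def B_def a_def using jN by (subst GG_lt) auto
  have hC': "GG N beta mu j = (\<lambda>x. X x * A' x + a' * B' x)"
    unfolding X_def A'_def B'_def a'_def using jN by (subst GG_lt) auto
  have pf: "pfn X" "pfn A" "pfn A'" "pfn B" "pfn B'"
    unfolding X_def A_def A'_def B_def B'_def by (auto intro: pfn.intros GG_pfn)
  have L: "\<And>S. pbr N (GG N beta lam j) S = (\<lambda>x. X x * pbr N A S x + A x * pbr N X S x + a * pbr N B S x)"
    unfolding hC using pbr_left[OF pf(1) pf(2) pf(4)] by simp
  have R: "\<And>S. pbr N S (GG N beta mu j) = (\<lambda>x. X x * pbr N S A' x + A' x * pbr N S X x + a' * pbr N S B' x)"
    unfolding hC' using pbr_right[OF pf(1) pf(3) pf(5)] by simp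
  from IH ne have e1: "pbr N A A' = (\<lambda>x. 0)" and e2: "pbr N B B' = (\<lambda>x. 0)"
    and e3: "pbr N A B' = (\<lambda>x. (B x * A' x - A x * B' x) / (lam - mu))"
    unfolding SS_def A_def A'_def B_def B'_def by auto
  from IH ne have e4: "pbr N A' B = (\<lambda>x. (B' x * A x - A' x * B x) / (mu - lam))"
    unfolding SS_def A_def A'_def B_def B'_def by (metis)
  have c1: "pbr N X A' = (\<lambda>x. - B' x)"
    unfolding X_def A'_def B'_def using pbr_X[OF N3 j1 jN, of "Suc j" beta mu] GG_pd by simp
  have c2: "pbr N X A = (\<lambda>x. - B x)"
    unfolding X_def A_def B_def using pbr_X[OF N3 j1 jN, of "Suc j" beta lam] GG_pd by simp
  have c3: "pbr N X B' = (\<lambda>x. 0)"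
    unfolding X_def B'_def using pbr_X[OF N3 j1 jN, of "Suc (Suc j)" beta mu]
      pd_indep[OF GG_indep[of "Suc j" "Suc (Suc j)" N beta mu]] by simp
  have c4: "pbr N X B = (\<lambda>x. 0)"
    unfolding X_def B_def using pbr_X[OF N3 j1 jN, of "Suc (Suc j)" beta lam]
      pd_indep[OF GG_indep[of "Suc j" "Suc (Suc j)" N beta lam]] by simp
  have c5: "pbr N X X = (\<lambda>x. 0)" by (rule pbr_self)
  have d1: "pbr N A X = (\<lambda>x. B x)" using pbr_anti[of N A X] c2 by simp
  have d2: "pbr N B X = (\<lambda>x. 0)" using pbr_anti[of N B X] c4 by simp
  have d3: "pbr N B A' = (\<lambda>x. - ((B' x * A x - A' x * B x) / (mu - lam)))"
    using pbr_anti[of N B A'] e4 by simp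
  have lm: "lam - mu \<noteq> 0" "mu - lam \<noteq> 0" using ne by auto
  have "pbr N (GG N beta lam j) (GG N beta mu j) = (\<lambda>x. 0)"
  proof
    fix x
    have "pbr N (GG N beta lam j) (GG N beta mu j) x
      = X x * (X x * pbr N A A' x + A' x * pbr N A X x + a' * pbr N A B' x)
        + A x * (X x * pbr N X A' x + A' x * pbr N X X x + a' * pbr N X B' x)
        + a * (X x * pbr N B A' x + A' x * pbr N B X x + a' * pbr N B B' x)"
      by (simp only: L, simp only: R)
    also have "\<dots> = 0"
      unfolding e1 e2 e3 c1 c3 c5 d1 d2 d3 a_def a'_def using lm
      by (simp add: field_simps, (simp add: algebra_simps)?)
    finally show "pbr N (GG N beta lam j) (GG N beta mu j) x = 0" .
  qed
  moreover have "pbr N (GG N beta lam (Suc j)) (GG N beta mu (Suc j)) = (\<lambda>x. 0)"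
    using e1 unfolding A_def A'_def .
  moreover have "pbr N (GG N beta lam j) (GG N beta mu (Suc j)) =
        (\<lambda>x. (GG N beta lam (Suc j) x * GG N beta mu j x - GG N beta lam j x * GG N beta mu (Suc j) x) / (lam - mu))"
  proof
    fix x
    have "pbr N (GG N beta lam j) (GG N beta mu (Suc j)) x
       = X x * pbr N A A' x + A x * pbr N X A' x + a * pbr N B A' x"
      unfolding A'_def by (simp add: L)
    also have "\<dots> = (A x * (X x * A' x + a' * B' x) - (X x * A x + a * B x) * A' x) / (lam - mu)"
      unfolding e1 c1 d3 a_def a'_def using lm
      by (simp add: field_simps, (simp add: algebra_simps)?)
    finally show "pbr N (GG N beta lam j) (GG N beta mu (Suc j)) x =
      (GG N beta lam (Suc j) x * GG N beta mu j x - GG N beta lam j x * GG N beta mu (Suc j) x) / (lam - mu)"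
      unfolding hC hC' A_def A'_def by simp
  qed
  ultimately show "pbr N (GG N beta lam j) (GG N beta mu j) = (\<lambda>x. 0)
    \<and> pbr N (GG N beta lam (Suc j)) (GG N beta mu (Suc j)) = (\<lambda>x. 0)
    \<and> pbr N (GG N beta lam j) (GG N beta mu (Suc j)) =
        (\<lambda>x. (GG N beta lam (Suc j) x * GG N beta mu j x - GG N beta lam j x * GG N beta mu (Suc j) x) / (lam - mu))"
    by blast
qed

lemma SS_all:
  assumes "N \<ge> 3" "1 \<le> m" "m \<le> N" shows "SS N beta m"
  using assms(3,2)
proof (induction m rule: inc_induct)
  case base
  show ?case by (rule SS_base)
next
  case (step n)
  then show ?case using SS_step[of N n beta] assms(1) by simp
qed

theorem mainTheorem8:
  fixes N :: nat and beta :: "nat \<Rightarrow> real" and lam mu :: real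
  assumes "N \<ge> 3" and "lam \<noteq> mu"
  shows "(\<forall>n < N - 2.
            pbr N (FF N beta (n + 1) lam) (FF N beta (n + 1) mu) = (\<lambda>x. 0)
          \<and> pbr N (FF N beta (n + 2) lam) (FF N beta (n + 2) mu) = (\<lambda>x. 0)
          \<and> pbr N (FF N beta (n + 1) lam) (FF N beta (n + 2) mu) =
              (\<lambda>x. (FF N beta (n + 2) lam x * FF N beta (n + 1) mu x
                    - FF N beta (n + 1) lam x * FF N beta (n + 2) mu x) / (lam - mu)))
       \<and> pbr N (FF N beta 2 lam) (FF N beta 2 mu) = (\<lambda>x. 0)
       \<and> pbr N (FF N beta 1 lam) (FF N beta 1 mu) = (\<lambda>x. 0)
       \<and> pbr N (FF N beta 2 lam) (FF N beta 1 mu) =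
              (\<lambda>x. (FF N beta 1 lam x * FF N beta 2 mu x
                    - FF N beta 2 lam x * FF N beta 1 mu x) / (lam - mu))"
proof -
  have N1: "1 \<le> N" using assms(1) by simp
  have P1: "\<forall>n < N - 2.
            pbr N (FF N beta (n + 1) lam) (FF N beta (n + 1) mu) = (\<lambda>x. 0)
          \<and> pbr N (FF N beta (n + 2) lam) (FF N beta (n + 2) mu) = (\<lambda>x. 0)
          \<and> pbr N (FF N beta (n + 1) lam) (FF N beta (n + 2) mu) =
              (\<lambda>x. (FF N beta (n + 2) lam x * FF N beta (n + 1) mu x
                    - FF N beta (n + 1) lam x * FF N beta (n + 2) mu x) / (lam - mu))"
  proof (intro allI impI)
    fix n assume n: "n < N - 2"
    have S: "SS N beta (Suc n)" using SS_all[OF assms(1)] n by simp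
    have f1: "FF N beta (n + 1) l = GG N beta l (Suc n)" for l using FF_GG[OF N1] n by simp
    have f2: "FF N beta (n + 2) l = GG N beta l (Suc (Suc n))" for l using FF_GG[OF N1] n by simp
    show "pbr N (FF N beta (n + 1) lam) (FF N beta (n + 1) mu) = (\<lambda>x. 0)
          \<and> pbr N (FF N beta (n + 2) lam) (FF N beta (n + 2) mu) = (\<lambda>x. 0)
          \<and> pbr N (FF N beta (n + 1) lam) (FF N beta (n + 2) mu) =
              (\<lambda>x. (FF N beta (n + 2) lam x * FF N beta (n + 1) mu x
                    - FF N beta (n + 1) lam x * FF N beta (n + 2) mu x) / (lam - mu))"
      unfolding f1 f2 using S assms(2) unfolding SS_def by blast
  qed
  have S1: "SS N beta 1" using SS_all[OF assms(1)] assms(1) by simp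
  have g1: "FF N beta 1 l = GG N beta l 1" for l using FF_GG[OF N1] assms(1) by simp
  have g2: "FF N beta 2 l = GG N beta l (Suc 1)" for l using FF_GG[OF N1, of 2] assms(1) by (simp add: numeral_2_eq_2)
  have a1: "pbr N (GG N beta lam (Suc 1)) (GG N beta mu (Suc 1)) = (\<lambda>x. 0)"
    and a2: "pbr N (GG N beta lam 1) (GG N beta mu 1) = (\<lambda>x. 0)"
    using S1 assms(2) unfolding SS_def by blast+
  have a3: "pbr N (GG N beta mu 1) (GG N beta lam (Suc 1)) =
        (\<lambda>x. (GG N beta mu (Suc 1) x * GG N beta lam 1 x - GG N beta mu 1 x * GG N beta lam (Suc 1) x) / (mu - lam))"
    using S1 assms(2) unfolding SS_def by metis
  have a4: "pbr N (GG N beta lam (Suc 1)) (GG N beta mu 1) =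
        (\<lambda>x. (GG N beta lam 1 x * GG N beta mu (Suc 1) x - GG N beta lam (Suc 1) x * GG N beta mu 1 x) / (lam - mu))"
  proof
    fix x
    have "pbr N (GG N beta lam (Suc 1)) (GG N beta mu 1) x = - pbr N (GG N beta mu 1) (GG N beta lam (Suc 1)) x"
      by (subst pbr_anti) simp
    also have "\<dots> = (GG N beta lam 1 x * GG N beta mu (Suc 1) x - GG N beta lam (Suc 1) x * GG N beta mu 1 x) / (lam - mu)"
      unfolding a3 using assms(2) by (simp add: field_simps)
    finally show "pbr N (GG N beta lam (Suc 1)) (GG N beta mu 1) x =
        (GG N beta lam 1 x * GG N beta mu (Suc 1) x - GG N beta lam (Suc 1) x * GG N beta mu 1 x) / (lam - mu)" .
  qed
  show ?thesis using P1 a1 a2 a4 unfolding g1 g2 by blast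
qed

end
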